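(* Let $q$ be a prime power with $q\equiv 1\pmod 4$, let $b\in\mathbb{F}_q$ with $b^2=-1$, let $f(x)=(x+1)(x+b)\in\mathbb{F}_q[x]$, and let $\alpha\in\mathbb{F}_{q^4}$ be normal over $\mathbb{F}_q$. Let $u,v\in\mathbb{F}_q^*$. If $\gamma=u\,L_f(\alpha)+v$ is primitive in $\mathbb{F}_{q^4}$, then $\gamma$ is $2$-normal over $\mathbb{F}_q$.
   Context: For $h(x)=\sum_i a_ix^i\in\mathbb{F}_q[x]$, $L_h(\alpha)=\sum_i a_i\alpha^{q^i}$. An element $\alpha\in\mathbb{F}_{q^n}$ is normal over $\mathbb{F}_q$ if $\alpha,\alpha^q,\dots,\alpha^{q^{n-1}}$ form an $\mathbb{F}_q$-basis of $\mathbb{F}_{q^n}$; it is primitive if it generates $\mathbb{F}_{q^n}^*$. For $\alpha\in\mathbb{F}_{q^n}$ let $g_\alpha(x)=\sum_{i=0}^{n-1}\alpha^{q^i}x^{n-1-i}$; $\alpha$ is $k$-normal over $\mathbb{F}_q$ if $\gcd(x^n-1,g_\alpha(x))$ in $\mathbb{F}_{q^n}[x]$ has degree $k$ (here $n=4$). *)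

theory Defs
  imports "HOL-Computational_Algebra.Computational_Algebra"
begin

text \<open>The ambient finite field is a type 'a of cardinality q^n; the base field F_q is
  realised as its unique subfield of order q, namely the fixed points of x \<mapsto> x^q.\<close>

definition base_field :: "nat \<Rightarrow> 'a::field set" where
  "base_field q = {x. x ^ q = x}"

definition prime_power :: "nat \<Rightarrow> bool" where
  "prime_power q \<longleftrightarrow> (\<exists>p k. prime p \<and> k > 0 \<and> q = p ^ k)"

definition linearized :: "nat \<Rightarrow> 'a::field poly \<Rightarrow> 'a \<Rightarrow> 'a" where
  "linearized q h \<alpha> = (\<Sum>i\<le>degree h. coeff h i * \<alpha> ^ (q ^ i))"

definition normal_elem :: "nat \<Rightarrow> nat \<Rightarrow> 'a::field \<Rightarrow> bool" where
  "normal_elem q n \<alpha> \<longleftrightarrow>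
     (\<forall>c. (\<forall>i<n. c i \<in> base_field q) \<and> (\<Sum>i<n. c i * \<alpha> ^ (q ^ i)) = 0 \<longrightarrow> (\<forall>i<n. c i = 0))
   \<and> (\<forall>x. \<exists>c. (\<forall>i<n. c i \<in> base_field q) \<and> x = (\<Sum>i<n. c i * \<alpha> ^ (q ^ i)))"

definition primitive_elem :: "'a::field \<Rightarrow> bool" where
  "primitive_elem \<gamma> \<longleftrightarrow> \<gamma> \<noteq> 0 \<and> (\<forall>x. x \<noteq> 0 \<longrightarrow> (\<exists>k::nat. \<gamma> ^ k = x))"

definition g_poly :: "nat \<Rightarrow> nat \<Rightarrow> 'a::field \<Rightarrow> 'a poly" where
  "g_poly q n \<alpha> = (\<Sum>i<n. monom (\<alpha> ^ (q ^ i)) (n - 1 - i))"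

definition k_normal :: "nat \<Rightarrow> nat \<Rightarrow> nat \<Rightarrow> 'a::field_gcd \<Rightarrow> bool" where
  "k_normal q n k \<alpha> \<longleftrightarrow> degree (gcd (monom 1 n - 1) (g_poly q n \<alpha>)) = k"

end

theory Submission imports Defs "HOL-Number_Theory.Residues" begin

lemma char_facts:
  fixes q :: nat
  assumes "prime_power q" "card (UNIV :: 'a::{field,finite} set) = q ^ 4"
  shows "prime CHAR('a)" "\<exists>k. q = CHAR('a) ^ k"
proof -
  have pos: "CHAR('a) > 0" by (rule finite_imp_CHAR_pos) simp
  show pr: "prime CHAR('a)" using prime_CHAR_semidom[OF pos] .
  obtain p k where p: "prime p" "k > 0" "q = p ^ k" using assms(1) unfolding prime_power_def by blast
  have "CHAR('a) dvd p ^ (k*4)" using CHAR_dvd_CARD[where 'a='a] assms(2) p(3) by (simp add: power_mult)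
  hence "CHAR('a) dvd p" using pr prime_dvd_power by blast
  hence "CHAR('a) = p" using pr p(1) primes_dvd_imp_eq by blast
  thus "\<exists>k. q = CHAR('a) ^ k" using p by blast
qed

lemma pow_card:
  fixes x :: "'a::{field,finite}"
  shows "x ^ card (UNIV :: 'a set) = x"
proof (cases "x = 0")
  case False
  have "x * (\<Prod>y\<in>UNIV-{0}. x * y) = x * x ^ (card (UNIV :: 'a set) - 1) * \<Prod>(UNIV-{0})"
    by (simp add: prod.distrib mult_ac)
  also have "x * x ^ (card (UNIV :: 'a set) - 1) = x ^ Suc (card (UNIV :: 'a set) - 1)"
    by (subst power_Suc) auto
  also have "Suc (card (UNIV :: 'a set) - 1) = card (UNIV :: 'a set)"
    using finite_UNIV_card_ge_0[where ?'a = 'a] by simp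
  also have "(\<Prod>y\<in>UNIV-{0}. x * y) = (\<Prod>y\<in>UNIV-{0}. y)"
    by (rule prod.reindex_bij_witness[of _ "\<lambda>y. y / x" "\<lambda>y. x * y"]) (use False in auto)
  finally show ?thesis
    by simp
qed (use finite_UNIV_card_ge_0[where ?'a = 'a] in auto)

lemma two_roots_dvd:
  fixes p :: "'a::field poly"
  assumes "poly p x = 0" "poly p y = 0" "x \<noteq> y"
  shows "[:-x,1:] * [:-y,1:] dvd p"
proof -
  obtain r where r: "p = [:-x,1:] * r" using assms(1) poly_eq_0_iff_dvd by (metis dvdE)
  have "poly r y = 0" using assms(2,3) r by simp
  then obtain s where "r = [:-y,1:] * s" using poly_eq_0_iff_dvd by (metis dvdE)
  hence "p = ([:-x,1:] * [:-y,1:]) * s" using r by (simp only: mult.assoc)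
  thus ?thesis by (rule dvdI)
qed

lemma lin: "linearized q ([:1, 1:] * [:b, 1:]) \<alpha> = b * \<alpha> + (1+b) * \<alpha>^q + \<alpha>^(q^2)"
proof -
  have e: "[:1, 1:] * [:b, 1:] = [:b, 1+b, 1:]" by (simp add: algebra_simps)
  show ?thesis unfolding e linearized_def by (simp add: numeral_2_eq_2 algebra_simps)
qed


lemma frob_step: "((x::'a::monoid_mult) ^ (q ^ i)) ^ q = x ^ (q ^ Suc i)"
  by (simp add: power_mult[symmetric] mult.commute)

lemma poly_g4: "poly (g_poly q 4 \<gamma>) c = \<gamma>^(q^0) * c^3 + \<gamma>^(q^1) * c^2 + \<gamma>^(q^2) * c + \<gamma>^(q^3)"
  by (simp add: g_poly_def poly_sum poly_monom eval_nat_numeral lessThan_Suc algebra_simps)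

lemma deg_X4: "degree (Polynomial.monom (1::'a::field) 4 - 1) = 4"
proof -
  have "Polynomial.monom (1::'a) 4 - 1 = Polynomial.monom 1 4 + (- 1)" by simp
  also have "degree \<dots> = 4" by (subst degree_add_eq_left) (simp_all add: degree_monom_eq)
  finally show ?thesis .
qed

lemma poly_X4: "poly (Polynomial.monom (1::'a::field) 4 - 1) c = c^4 - 1"
  by (simp add: poly_monom)


lemma Pm1_id: fixes u v b a0 a1 a2 a3 :: "'a::field"
  shows "(u * (b*a0 + (1+b)*a1 + a2) + v) * (-1)^3 + (u * (b*a1 + (1+b)*a2 + a3) + v) * (-1)^2
     + (u * (b*a2 + (1+b)*a3 + a0) + v) * (-1) + (u * (b*a3 + (1+b)*a0 + a1) + v) = 0"
  by (simp add: algebra_simps eval_nat_numeral)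
lemma Pmb_id: fixes u v b a0 a1 a2 a3 :: "'a::field"
  assumes "b^2 = -1"
  shows "(u * (b*a0 + (1+b)*a1 + a2) + v) * (-b)^3 + (u * (b*a1 + (1+b)*a2 + a3) + v) * (-b)^2
     + (u * (b*a2 + (1+b)*a3 + a0) + v) * (-b) + (u * (b*a3 + (1+b)*a0 + a1) + v) = 0"
  proof -
  have bb: "b*(b*x) = -x" for x using assms by (simp add: mult.assoc[symmetric] power2_eq_square)
  show ?thesis by (simp add: algebra_simps eval_nat_numeral bb)
qed
lemma Pb_id: fixes u v b a0 a1 a2 a3 :: "'a::field"
  assumes "b^2 = -1"
  shows "(u * (b*a0 + (1+b)*a1 + a2) + v) * b^3 + (u * (b*a1 + (1+b)*a2 + a3) + v) * b^2
     + (u * (b*a2 + (1+b)*a3 + a0) + v) * b + (u * (b*a3 + (1+b)*a0 + a1) + v) = u*2*b*(1+b)*(-b*a0 - a1 + b*a2 + a3)"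
  proof -
  have bb: "b*(b*x) = -x" for x using assms by (simp add: mult.assoc[symmetric] power2_eq_square)
  show ?thesis by (simp add: algebra_simps eval_nat_numeral bb)
qed
lemma P1_id: fixes u v b a0 a1 a2 a3 :: "'a::field"
  shows "(u * (b*a0 + (1+b)*a1 + a2) + v) * 1^3 + (u * (b*a1 + (1+b)*a2 + a3) + v) * 1^2
     + (u * (b*a2 + (1+b)*a3 + a0) + v) * 1 + (u * (b*a3 + (1+b)*a0 + a1) + v) = 2*u*(1+b)*(a0+a1+a2+a3) + 4*v"
  by (simp add: algebra_simps eval_nat_numeral)
lemma G_id: fixes u v b a0 a1 a2 a3 :: "'a::field"
  assumes "b^2 = -1"
  shows "2*(1+b)*((u * (b*a1 + (1+b)*a2 + a3) + v) - b*(u * (b*a0 + (1+b)*a1 + a2) + v)) = 2*u*(1+b)*(a0+a1+a2+a3) + 4*v"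
  proof -
  have bb: "b*(b*x) = -x" for x using assms by (simp add: mult.assoc[symmetric] power2_eq_square)
  show ?thesis by (simp add: algebra_simps eval_nat_numeral bb)
qed

theorem lemma7p1:
  fixes q :: nat and b u v \<alpha> :: "'a::{field_gcd,finite}"
  assumes "prime_power q" and "q mod 4 = 1"
    and "card (UNIV :: 'a set) = q ^ 4"
    and "b \<in> base_field q" and "b ^ 2 = -1"
    and "normal_elem q 4 \<alpha>"
    and "u \<in> base_field q" "u \<noteq> 0" and "v \<in> base_field q" "v \<noteq> 0"
    and "primitive_elem (u * linearized q ([:1, 1:] * [:b, 1:]) \<alpha> + v)"
  shows "k_normal q 4 2 (u * linearized q ([:1, 1:] * [:b, 1:]) \<alpha> + v)"
proof -
  note cf = char_facts[OF assms(1,3)]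
  obtain k where qk: "q = CHAR('a) ^ k" using cf(2) by blast
  have add: "(x + y) ^ q = x ^ q + y ^ q" for x y :: 'a
    using freshmans_dream'[OF cf(1) qk] .
  have mul: "(x * y) ^ q = x ^ q * y ^ q" for x y :: 'a by (simp add: power_mult_distrib)
  have bq: "b ^ q = b" "u ^ q = u" "v ^ q = v" using assms(4,7,9) unfolding base_field_def by auto
  have oq: "odd q" using assms(2) by presburger
  obtain p0 k0 where p0: "prime p0" "k0 > 0" "q = p0 ^ k0" using assms(1) unfolding prime_power_def by blast
  have q2: "q \<ge> 2"
  proof -
    have "p0 \<le> p0 ^ k0" using p0(1,2) prime_ge_2_nat[of p0] by (intro self_le_power) auto
    thus ?thesis using p0(3) prime_ge_2_nat[OF p0(1)] by linarith
  qed
  have two: "(2::'a) \<noteq> 0"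
  proof
    assume "(2::'a) = 0"
    hence "of_nat 2 = (0::'a)" by simp
    hence "CHAR('a) dvd 2" using of_nat_eq_0_iff_char_dvd by blast
    hence "CHAR('a) = 2" using primes_dvd_imp_eq[OF cf(1) two_is_prime_nat] by blast
    hence "even q" using qk q2 by (cases k) auto
    thus False using oq by simp
  qed
  have b2: "b * b = -1" using assms(5) by (simp add: power2_eq_square)
  have b1: "1 + b \<noteq> 0"
  proof
    assume "1 + b = 0" hence "b = -1" by (simp add: add_eq_0_iff)
    hence "(2::'a) = 0" using b2 by simp
    thus False using two by simp
  qed
  have bn1: "b \<noteq> 1" using b2 two by auto
  have bn0: "b \<noteq> 0" using b2 by auto
  have ob: "(1 + b) ^ q = 1 + b" using add bq by simp
  define a0 a1 a2 a3 where "a0 = \<alpha>" "a1 = \<alpha>^q" "a2 = \<alpha>^(q^2)" "a3 = \<alpha>^(q^3)"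
  have a4: "\<alpha>^(q^4) = \<alpha>" using pow_card[of \<alpha>] assms(3) by simp
  have fa: "a0^q = a1" "a1^q = a2" "a2^q = a3" "a3^q = a0"
    unfolding a0_a1_a2_a3_def using frob_step[of \<alpha> q 1] frob_step[of \<alpha> q 2] frob_step[of \<alpha> q 3] a4
    by (simp_all add: eval_nat_numeral)
  define \<gamma> where "\<gamma> = u * linearized q ([:1, 1:] * [:b, 1:]) \<alpha> + v"
  have g0: "\<gamma> = u * (b*a0 + (1+b)*a1 + a2) + v" unfolding \<gamma>_def lin a0_a1_a2_a3_def by simp
  have F: "(u * (b*x + (1+b)*y + z) + v) ^ q = u * (b*x^q + (1+b)*y^q + z^q) + v" for x y z
  proof -
    have "(b*x + (1+b)*y + z) ^ q = b*x^q + (1+b)*y^q + z^q"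
      unfolding add mul bq power_one ..
    thus ?thesis unfolding add mul bq by simp
  qed
  have g1: "\<gamma>^(q^1) = u * (b*a1 + (1+b)*a2 + a3) + v" using F[of a0 a1 a2] g0 fa by simp
  have g2: "\<gamma>^(q^2) = u * (b*a2 + (1+b)*a3 + a0) + v"
    using F[of a1 a2 a3] g1 fa frob_step[of \<gamma> q 1] by (simp add: numeral_2_eq_2)
  have g3: "\<gamma>^(q^3) = u * (b*a3 + (1+b)*a0 + a1) + v"
    using F[of a2 a3 a0] g2 fa frob_step[of \<gamma> q 2] by (simp add: eval_nat_numeral)
  have gz: "\<gamma>^(q^0) = u * (b*a0 + (1+b)*a1 + a2) + v" using g0 by simp
  define P where "P = g_poly q 4 \<gamma>"
  have PE: "poly P c = (u * (b*a0 + (1+b)*a1 + a2) + v) * c^3 + (u * (b*a1 + (1+b)*a2 + a3) + v) * c^2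
     + (u * (b*a2 + (1+b)*a3 + a0) + v) * c + (u * (b*a3 + (1+b)*a0 + a1) + v)" for c
    unfolding P_def poly_g4 gz g1 g2 g3 ..
  have b3: "b^3 = -b" using b2 by (simp add: eval_nat_numeral)
  have Pm1: "poly P (-1) = 0" unfolding PE by (rule Pm1_id)
  have Pmb: "poly P (-b) = 0" unfolding PE using assms(5) by (rule Pmb_id)
  have Pb: "poly P b = u*2*b*(1+b)*(-b*a0 - a1 + b*a2 + a3)"
    unfolding PE using assms(5) by (rule Pb_id)
  have P1: "poly P 1 = 2*u*(1+b)*(a0+a1+a2+a3) + 4*v"
    unfolding PE by (rule P1_id)
  have nz: "-b*a0 - a1 + b*a2 + a3 \<noteq> 0"
  proof
    assume h: "-b*a0 - a1 + b*a2 + a3 = 0"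
    define c where "c = (\<lambda>i::nat. if i = 0 then -b else if i = 1 then -1 else if i = 2 then b else (1::'a))"
    have cb: "\<forall>i<4. c i \<in> base_field q"
      using bq(1) power_minus_odd[OF oq, of b] power_minus_odd[OF oq, of 1]
      by (auto simp: c_def base_field_def eval_nat_numeral less_Suc_eq)
    have "(\<Sum>i<4. c i * \<alpha> ^ (q ^ i)) = -b*a0 - a1 + b*a2 + a3"
      by (simp add: c_def a0_a1_a2_a3_def eval_nat_numeral lessThan_Suc)
    hence "\<forall>i<4. c i = 0" using assms(6) cb h unfolding normal_elem_def by metis
    hence "c 3 = 0" by simp
    thus False by (simp add: c_def)
  qed
  have Pb_ne: "poly P b \<noteq> 0" unfolding Pb using nz assms(8) two bn0 b1 by simp
  have gnz: "\<gamma> \<noteq> 0" using assms(11) unfolding \<gamma>_def primitive_elem_def by simp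
  have P1_ne: "poly P 1 \<noteq> 0"
  proof
    assume "poly P 1 = 0"
    hence H: "2*(1+b)*((u * (b*a1 + (1+b)*a2 + a3) + v) - b*(u * (b*a0 + (1+b)*a1 + a2) + v)) = 0"
      using G_id[OF assms(5)] P1 by simp
    have t: "2*(1+b) \<noteq> (0::'a)" unfolding mult_eq_0_iff using two b1 by blast
    have "(u * (b*a1 + (1+b)*a2 + a3) + v) - b*(u * (b*a0 + (1+b)*a1 + a2) + v) = 0"
      using mult_eq_0_iff[THEN iffD1, OF H] t by blast
    hence gq: "\<gamma>^q = b * \<gamma>" using g1 g0 by simp
    have "\<gamma>^(q-1) * \<gamma> = \<gamma>^(Suc (q-1))" by (simp only: power_Suc2)
    also have "Suc (q-1) = q" using q2 by simp
    finally have "\<gamma>^(q-1) * \<gamma> = b * \<gamma>" using gq by simp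
    hence g1b: "\<gamma>^(q-1) = b" using gnz by simp
    define N where "N = 4 * (q - 1)"
    have b4: "b^4 = 1" proof -
    have "b^4 = (b^2)^2" by (simp flip: power_mult)
    thus ?thesis using assms(5) by simp
  qed
    have "\<gamma>^N = (\<gamma>^(q-1))^4" unfolding N_def by (metis power_mult mult.commute)
    hence gN: "\<gamma>^N = 1" using g1b b4 by simp
    have Npos: "N > 0" unfolding N_def using q2 by simp
    have sub: "UNIV - {0} \<subseteq> (\<lambda>k. \<gamma>^k) ` {..<N}"
    proof
      fix x :: 'a assume "x \<in> UNIV - {0}"
      then obtain k where k: "\<gamma>^k = x" using assms(11) unfolding \<gamma>_def primitive_elem_def by auto
      have "\<gamma>^k = \<gamma>^(N * (k div N) + k mod N)" by (simp only: mult_div_mod_eq)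
      also have "\<dots> = \<gamma>^(k mod N)" by (simp only: power_add power_mult gN power_one mult_1)
      finally show "x \<in> (\<lambda>k. \<gamma>^k) ` {..<N}" using k Npos by auto
    qed
    have "card (UNIV - {0::'a}) \<le> card ((\<lambda>k. \<gamma>^k) ` {..<N})" by (rule card_mono[OF _ sub]) simp
    also have "\<dots> \<le> N" using card_image_le[of "{..<N}" "\<lambda>k. \<gamma>^k"] by simp
    finally have c1: "card (UNIV - {0::'a}) \<le> N" .
    have "card (UNIV - {0::'a}) = q^4 - 1" using assms(3) by (simp add: card_Diff_singleton)
    moreover have "q^4 - 1 > N"
    proof -
      have "q^3 \<ge> 2^3" using q2 by (rule power_mono) simp
      hence "q^3 \<ge> 8" by simp
      hence "q * q^3 \<ge> q * 8" by (rule mult_le_mono2)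
      moreover have "q^4 = q * q^3" by (simp add: eval_nat_numeral)
      ultimately have "q^4 \<ge> 8*q" by simp
      thus ?thesis unfolding N_def using q2 by linarith
    qed
    ultimately show False using c1 by simp
  qed
  define X where "X = Polynomial.monom (1::'a) 4 - 1"
  define d where "d = gcd X P"
  have Xnz: "X \<noteq> 0" using deg_X4[where 'a='a] unfolding X_def by auto
  have dnz: "d \<noteq> 0" unfolding d_def using Xnz by simp
  have b4': "b^4 = 1" proof -
    have "b^4 = (b^2)^2" by (simp flip: power_mult)
    thus ?thesis using assms(5) by simp
  qed
  have dP: "d dvd P" unfolding d_def by simp
  have dX: "d dvd X" unfolding d_def by simp
  have lo: "degree d \<ge> 2"
  proof -
    have ne: "-1 \<noteq> -b" using bn1 by simp
    have "[:-(-1),1:] * [:-(-b),1:] dvd P" by (rule two_roots_dvd[OF Pm1 Pmb ne])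
    moreover have "[:-(-1),1:] * [:-(-b),1:] dvd X"
      by (rule two_roots_dvd[OF _ _ ne]) (simp_all add: X_def poly_monom b4')
    ultimately have "[:-(-1),1:] * [:-(-b),1:] dvd d" unfolding d_def by simp
    from dvd_imp_degree_le[OF this dnz] show ?thesis by simp
  qed
  have hi: "degree d \<le> 2"
  proof -
    obtain e where e: "X = d * e" using dX by (elim dvdE)
    have enz: "e \<noteq> 0" using e Xnz by auto
    have dne: "poly d c \<noteq> 0" if "poly P c \<noteq> 0" for c
      using that dP by (auto elim!: dvdE)
    have "poly e 1 = 0" using dne[OF P1_ne] arg_cong[OF e, of "\<lambda>p. poly p 1"] by (simp add: X_def poly_monom)
    moreover have "poly e b = 0" using dne[OF Pb_ne] arg_cong[OF e, of "\<lambda>p. poly p b"] b4' by (simp add: X_def poly_monom)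
    ultimately have "[:-1,1:] * [:-b,1:] dvd e" using bn1 by (intro two_roots_dvd) auto
    from dvd_imp_degree_le[OF this enz] have "degree e \<ge> 2" by simp
    moreover have "degree X = degree d + degree e" using e dnz enz by (simp add: degree_mult_eq)
    ultimately show ?thesis using deg_X4[where 'a='a] unfolding X_def by simp
  qed
  have "degree d = 2" using lo hi by simp
  thus ?thesis unfolding k_normal_def \<gamma>_def[symmetric] X_def[symmetric] P_def[symmetric] d_def[symmetric] .
qed

end
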